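(* Let $p,q$ be positive integers with $2\le p/q<4$, let $f$ be a $(p,q)$-colouring of a graph $G$, and let $v$ be a vertex lying on a directed cycle of $D_f$ (i.e. in a nontrivial strongly connected component of $D_f$). Then $v$ is fixed: for every $(p,q)$-colouring $h$ obtainable from $f$ by a sequence of single-vertex recolourings (each intermediate map being a $(p,q)$-colouring), $h(v)=f(v)$.
   Context: A $(p,q)$-colouring of $G$ is a map $f:V(G)\to\{0,\dots,p-1\}$ with $q\le|f(u)-f(v)|\le p-q$ for every edge $uv$. $D_f$ is the digraph on $V(G)$ with an arc $\overrightarrow{xy}$ whenever $xy\in E(G)$ and $f(y)-f(x)\equiv q\pmod p$ (for $p=2q$ each edge yields a directed 2-cycle). *)

theory Defs
  imports Main
begin

definition simple_graph :: "'a set \<Rightarrow> ('a \<Rightarrow> 'a \<Rightarrow> bool) \<Rightarrow> bool" where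
  "simple_graph V E \<longleftrightarrow> finite V \<and> (\<forall>x y. E x y \<longrightarrow> x \<in> V \<and> y \<in> V \<and> x \<noteq> y \<and> E y x)"

definition pq_colouring :: "int \<Rightarrow> int \<Rightarrow> 'a set \<Rightarrow> ('a \<Rightarrow> 'a \<Rightarrow> bool) \<Rightarrow> ('a \<Rightarrow> int) \<Rightarrow> bool" where
  "pq_colouring p q V E f \<longleftrightarrow>
     (\<forall>v\<in>V. 0 \<le> f v \<and> f v < p) \<and>
     (\<forall>u v. E u v \<longrightarrow> q \<le> \<bar>f u - f v\<bar> \<and> \<bar>f u - f v\<bar> \<le> p - q)"

definition Df_arc :: "int \<Rightarrow> int \<Rightarrow> ('a \<Rightarrow> 'a \<Rightarrow> bool) \<Rightarrow> ('a \<Rightarrow> int) \<Rightarrow> 'a \<Rightarrow> 'a \<Rightarrow> bool" where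
  "Df_arc p q E f x y \<longleftrightarrow> E x y \<and> (f y - f x) mod p = q mod p"

definition recolour_step :: "int \<Rightarrow> int \<Rightarrow> 'a set \<Rightarrow> ('a \<Rightarrow> 'a \<Rightarrow> bool) \<Rightarrow> ('a \<Rightarrow> int) \<Rightarrow> ('a \<Rightarrow> int) \<Rightarrow> bool" where
  "recolour_step p q V E g g' \<longleftrightarrow>
     pq_colouring p q V E g \<and> pq_colouring p q V E g' \<and>
     (\<exists>u\<in>V. \<forall>x. x \<noteq> u \<longrightarrow> g' x = g x)"

end

theory Submission
  imports Defs
begin

lemma mod_case:
  fixes a p q :: int
  assumes "a mod p = q mod p" "0 < q" "q < p" "-p < a" "a < p"
  shows "a = q \<or> a = q - p"
proof -
  have qq: "q mod p = q" using assms by (intro mod_pos_pos_trivial) auto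
  show ?thesis
  proof (cases "a \<ge> 0")
    case True
    then have "a mod p = a" using assms by (intro mod_pos_pos_trivial) auto
    then show ?thesis using assms qq by linarith
  next
    case False
    have "(a + p) mod p = a + p" using assms False by (intro mod_pos_pos_trivial) auto
    then have "a mod p = a + p" by (metis mod_add_self2)
    then show ?thesis using assms qq by linarith
  qed
qed

lemma key:
  assumes sg: "simple_graph V E"
    and q: "q > 0" "2 * q \<le> p" "p < 4 * q"
    and cg: "pq_colouring p q V E g" and cg': "pq_colouring p q V E g'"
    and same: "\<forall>z. z \<noteq> u \<longrightarrow> g' z = g z"
    and a1: "Df_arc p q E g w x" and a2: "Df_arc p q E g x y"
  shows "g' x = g x"
proof (cases "x = u")
  case False then show ?thesis using same by simp
next
  case True
  have E1: "E w x" and E2: "E x y" using a1 a2 by (auto simp: Df_arc_def)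
  have V: "w \<in> V" "x \<in> V" "y \<in> V" "w \<noteq> x" "x \<noteq> y"
    using sg E1 E2 unfolding simple_graph_def by blast+
  have gw: "g' w = g w" and gy: "g' y = g y" using same True V by auto
  have r: "\<forall>v\<in>V. 0 \<le> g v \<and> g v < p" "\<forall>v\<in>V. 0 \<le> g' v \<and> g' v < p"
    using cg cg' by (auto simp: pq_colouring_def)
  have e1: "q \<le> \<bar>g' w - g' x\<bar> \<and> \<bar>g' w - g' x\<bar> \<le> p - q"
    using cg' E1 by (auto simp: pq_colouring_def)
  have e2: "q \<le> \<bar>g' x - g' y\<bar> \<and> \<bar>g' x - g' y\<bar> \<le> p - q"
    using cg' E2 by (auto simp: pq_colouring_def)
  have rw: "0 \<le> g w" "g w < p" "0 \<le> g x" "g x < p" "0 \<le> g y" "g y < p"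
    using r V by auto
  have d1: "(g x - g w) mod p = q mod p" and d2: "(g y - g x) mod p = q mod p"
    using a1 a2 by (auto simp: Df_arc_def)
  have m1: "g x - g w = q \<or> g x - g w = q - p"
    by (rule mod_case[OF d1]) (use q rw in linarith)+
  have m2: "g y - g x = q \<or> g y - g x = q - p"
    by (rule mod_case[OF d2]) (use q rw in linarith)+
  have b: "0 \<le> g' x" "g' x < p" "0 \<le> g x" "g x < p" using r V by auto
  have e1': "q \<le> \<bar>g' x - g w\<bar> \<and> \<bar>g' x - g w\<bar> \<le> p - q" using e1 gw by (simp add: abs_minus_commute)
  have e2': "q \<le> \<bar>g' x - g y\<bar> \<and> \<bar>g' x - g y\<bar> \<le> p - q" using e2 gy by simp
  show ?thesis using m1 m2 e1' e2' b q
    by (smt (verit))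
qed

lemma step_inv:
  assumes sg: "simple_graph V E"
    and q: "q > 0" "2 * q \<le> p" "p < 4 * q"
    and st: "recolour_step p q V E g g'"
    and cyc: "(Df_arc p q E g)\<^sup>+\<^sup>+ v v"
  shows "(Df_arc p q E g')\<^sup>+\<^sup>+ v v \<and> g' v = g v"
proof -
  let ?r = "Df_arc p q E g"
  let ?r' = "Df_arc p q E g'"
  obtain u where cg: "pq_colouring p q V E g" and cg': "pq_colouring p q V E g'"
    and same: "\<forall>z. z \<noteq> u \<longrightarrow> g' z = g z"
    using st unfolding recolour_step_def by blast
  have fix_: "g' x = g x" if "?r w x" "?r x y" for w x y
    using key[OF sg q cg cg' same that] .
  have inarc: "\<exists>w. ?r w x" if "?r\<^sup>+\<^sup>+ a x" for a x
    using that by (cases rule: tranclp.cases) auto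
  have outarc: "\<exists>y. ?r x y" if "?r\<^sup>+\<^sup>+ x b" for x b
    using that by (auto dest: tranclpD)
  have arc: "?r' x y" if "?r x y" "g' x = g x" "g' y = g y" for x y
    using that by (simp add: Df_arc_def)
  have main: "?r\<^sup>+\<^sup>+ b v \<longrightarrow> ?r'\<^sup>+\<^sup>+ v b" if "?r\<^sup>+\<^sup>+ v b" for b
    using that
  proof (induction rule: tranclp_induct)
    case (base y)
    show ?case
    proof
      assume yv: "?r\<^sup>+\<^sup>+ y v"
      obtain w where "?r w v" using inarc[OF yv] by blast
      then have "g' v = g v" using fix_ base by blast
      moreover obtain z where "?r y z" using outarc[OF yv] by blast
      then have "g' y = g y" using fix_ base by blast
      ultimately show "?r'\<^sup>+\<^sup>+ v y" using arc base by blast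
    qed
  next
    case (step y z)
    show ?case
    proof
      assume zv: "?r\<^sup>+\<^sup>+ z v"
      have yv: "?r\<^sup>+\<^sup>+ y v" using step(2) zv by auto
      have IH: "?r'\<^sup>+\<^sup>+ v y" using step(3) yv by blast
      obtain w where "?r w y" using inarc[OF step(1)] by blast
      then have "g' y = g y" using fix_ step(2) by blast
      moreover obtain z' where "?r z z'" using outarc[OF zv] by blast
      then have "g' z = g z" using fix_ step(2) by blast
      ultimately have "?r' y z" using arc step(2) by blast
      then show "?r'\<^sup>+\<^sup>+ v z" using IH by auto
    qed
  qed
  have "?r'\<^sup>+\<^sup>+ v v" using main[OF cyc] cyc by blast
  moreover obtain w where "?r w v" using inarc[OF cyc] by blast
  moreover obtain y where "?r v y" using outarc[OF cyc] by blast
  ultimately show ?thesis using fix_ by blast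
qed

theorem lemma2p8:
  fixes V :: "'a set" and E :: "'a \<Rightarrow> 'a \<Rightarrow> bool" and p q :: int
    and f h :: "'a \<Rightarrow> int" and v :: 'a
  assumes "simple_graph V E"
    and "q > 0" and "2 * q \<le> p" and "p < 4 * q"
    and "pq_colouring p q V E f"
    and "(Df_arc p q E f)\<^sup>+\<^sup>+ v v"
    and "(recolour_step p q V E)\<^sup>*\<^sup>* f h"
  shows "h v = f v"
proof -
  have "(Df_arc p q E h)\<^sup>+\<^sup>+ v v \<and> h v = f v"
    using assms(7)
  proof (induction rule: rtranclp_induct)
    case base then show ?case using assms(6) by simp
  next
    case (step g g')
    then show ?case using step_inv[OF assms(1-4) step(2)] by auto
  qed
  then show ?thesis by simp
qed

end
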